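(* Let $\mathcal{Z}=\{z_1,\dots,z_n\}\subset\mathbb{R}^2$ be a finite set of points, let $d_{ij}$ denote the Euclidean distance between $z_i$ and $z_j$, and fix a cutoff distance $d_c>0$. Define the density of each point by $\rho_i=\sum_{j\neq i}\exp\!\left(-(d_{ij}/d_c)^2\right)$, and define $\delta_i=\min_{j:\rho_j>\rho_i} d_{ij}$ when some $j$ satisfies $\rho_j>\rho_i$, and $\delta_i=\max_{k,l} d_{kl}$ otherwise. Let $\bar{\rho}=\frac{1}{n}\sum_{j=1}^n\rho_j$. Call $z_i$ a local cluster center if $\delta_i>d_c$ and $\rho_i>\bar{\rho}$. If $z_i$ and $z_j$ are two local cluster centers with $\rho_i\neq\rho_j$, then $d_{ij}\ge d_c$. *)

theory Defs
  imports "HOL-Analysis.Analysis"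
begin

definition dp_rho :: "(real^2) set \<Rightarrow> real \<Rightarrow> real^2 \<Rightarrow> real" where
  "dp_rho Z dc z = (\<Sum>w\<in>Z - {z}. exp (- ((dist z w / dc)^2)))"

definition dp_delta :: "(real^2) set \<Rightarrow> real \<Rightarrow> real^2 \<Rightarrow> real" where
  "dp_delta Z dc z =
     (if \<exists>w\<in>Z. dp_rho Z dc w > dp_rho Z dc z
      then Min {dist z w | w. w \<in> Z \<and> dp_rho Z dc w > dp_rho Z dc z}
      else Max {dist k l | k l. k \<in> Z \<and> l \<in> Z})"

definition dp_rho_bar :: "(real^2) set \<Rightarrow> real \<Rightarrow> real" where
  "dp_rho_bar Z dc = (\<Sum>w\<in>Z. dp_rho Z dc w) / real (card Z)"

definition local_cluster_center :: "(real^2) set \<Rightarrow> real \<Rightarrow> real^2 \<Rightarrow> bool" where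
  "local_cluster_center Z dc z \<longleftrightarrow>
     z \<in> Z \<and> dp_delta Z dc z > dc \<and> dp_rho Z dc z > dp_rho_bar Z dc"

end

theory Submission
  imports Defs
begin

lemma aux:
  assumes "finite Z" "local_cluster_center Z dc a" "b \<in> Z"
    and "dp_rho Z dc a < dp_rho Z dc b"
  shows "dist a b > dc"
proof -
  have ex: "\<exists>w\<in>Z. dp_rho Z dc w > dp_rho Z dc a" using assms by blast
  let ?S = "{dist a w | w. w \<in> Z \<and> dp_rho Z dc w > dp_rho Z dc a}"
  have fin: "finite ?S" using assms(1) by simp
  have mem: "dist a b \<in> ?S" using assms by blast
  have "dp_delta Z dc a = Min ?S" using ex unfolding dp_delta_def by simp
  also have "\<dots> \<le> dist a b" using Min_le[OF fin mem] .
  finally show ?thesis using assms(2) unfolding local_cluster_center_def by linarith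
qed

theorem theorem2:
  fixes Z :: "(real^2) set" and dc :: real and zi zj :: "real^2"
  assumes "finite Z" and "dc > 0"
    and "local_cluster_center Z dc zi" and "local_cluster_center Z dc zj"
    and "dp_rho Z dc zi \<noteq> dp_rho Z dc zj"
  shows "dist zi zj \<ge> dc"
proof (cases "dp_rho Z dc zi < dp_rho Z dc zj")
  case True
  have "zj \<in> Z" using assms(4) unfolding local_cluster_center_def by blast
  then show ?thesis using aux[OF assms(1) assms(3) _ True] by simp
next
  case False
  then have lt: "dp_rho Z dc zj < dp_rho Z dc zi" using assms(5) by linarith
  have "zi \<in> Z" using assms(3) unfolding local_cluster_center_def by blast
  then show ?thesis using aux[OF assms(1) assms(4) _ lt] by (simp add: dist_commute)
qed

end
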